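(* Let $0<x_1<\dots<x_n$ and $a_1,\dots,a_n>0$ with $\sum a_i=1$, and let $\mu=\sum_{i=1}^na_i\delta_{x_i}$. Let $\eta_i$, $H$, $\nu$ be as in the setting below, and $m_\eta=\mathbf{E}[\eta_1]$. Then $$s_\nu(z)=\frac{-1}{z\sum_{i=1}^n\frac{a_i}{x_i-z}}-1,$$ and $\nu$ is purely atomic with exactly $n$ atoms located in increasing order at $0,y_1,\dots,y_{n-1}$, where $y_i$ is the unique root of $y\mapsto\sum_{j=1}^n\frac{a_j}{x_j-y}$ in $(x_i,x_{i+1})$; the mass is $\nu(\{y_i\})=\lim_{z\to y_i}(y_i-z)s_\nu(z)$. Consequently, for all $x>0$, $$H(x)=\frac1{m_\eta}+\sum_{i=1}^{n-1}e^{-xy_i}\nu(\{y_i\}).$$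
   Context: Setting: $\mu$ is a probability measure on $[0,\infty)$; $(\eta_n)_{n\ge1}$ are i.i.d. positive random variables with density $f_\eta(x)=\int_0^\infty s e^{-sx}\mathrm{d}\mu(s)$, $x>0$; $H(x)=\sum_{k\ge1}f_{\eta_1+\dots+\eta_k}(x)$ is the renewal intensity; $\nu$ is the positive measure on $[0,\infty)$ with $(1+s_\nu(z))s_\mu(z)=-1/z$ and $H(x)=\int_0^\infty e^{-xs}\mathrm{d}\nu(s)$. Stieltjes transform: $s_\mu(z)=\int\frac{\mathrm{d}\mu(x)}{x-z}$. *)

theory Defs
  imports "HOL-Analysis.Analysis"
begin

definition stieltjes :: "real measure \<Rightarrow> complex \<Rightarrow> complex" where
  "stieltjes M z = (\<integral> s. 1 / (complex_of_real s - z) \<partial>M)"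

text \<open>Density of eta for mu = sum_{i=1..n} a_i delta_{x_i}:
  f(t) = int s e^{-s t} dmu(s) = sum a_i x_i e^{-x_i t} for t > 0 (0 otherwise).\<close>
definition f_eta :: "nat \<Rightarrow> (nat \<Rightarrow> real) \<Rightarrow> (nat \<Rightarrow> real) \<Rightarrow> real \<Rightarrow> real" where
  "f_eta n a x t = (if t > 0 then (\<Sum>i\<in>{1..n}. a i * x i * exp (- x i * t)) else 0)"

text \<open>Convolution of densities supported on (0, infinity).\<close>
definition conv :: "(real \<Rightarrow> real) \<Rightarrow> (real \<Rightarrow> real) \<Rightarrow> real \<Rightarrow> real" where
  "conv f g t = (\<integral> s. indicator {0..t} s * f s * g (t - s) \<partial>lborel)"

text \<open>conv_pow f k is the density of eta_1 + ... + eta_(k+1).\<close>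
primrec conv_pow :: "(real \<Rightarrow> real) \<Rightarrow> nat \<Rightarrow> real \<Rightarrow> real" where
  "conv_pow f 0 = f"
| "conv_pow f (Suc k) = conv (conv_pow f k) f"

definition renewal_H :: "(real \<Rightarrow> real) \<Rightarrow> real \<Rightarrow> real" where
  "renewal_H f t = (\<Sum>k. conv_pow f k t)"

definition mean_eta :: "(real \<Rightarrow> real) \<Rightarrow> real" where
  "mean_eta f = (\<integral> t. t * f t \<partial>lborel)"

end

theory Submission
  imports Defs "HOL-Probability.Distributions"
begin


definition gg :: "nat \<Rightarrow> (nat\<Rightarrow>real) \<Rightarrow> (nat\<Rightarrow>real) \<Rightarrow> 'a::real_normed_field \<Rightarrow> 'a" where
  "gg n a x z = (\<Sum>i\<in>{1..n}. of_real (a i) / (of_real (x i) - z))"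
definition PP :: "nat \<Rightarrow> (nat\<Rightarrow>real) \<Rightarrow> 'a::real_normed_field \<Rightarrow> 'a" where
  "PP n x z = (\<Prod>i\<in>{1..n}. (of_real (x i) - z))"
definition QQ :: "nat \<Rightarrow> (nat\<Rightarrow>real) \<Rightarrow> (nat\<Rightarrow>real) \<Rightarrow> 'a::real_normed_field \<Rightarrow> 'a" where
  "QQ n a x z = (\<Sum>i\<in>{1..n}. of_real (a i) * (\<Prod>k\<in>{1..n}-{i}. (of_real (x k) - z)))"

locale cfg =
  fixes n :: nat and x a :: "nat \<Rightarrow> real"
  assumes n_pos: "n \<ge> 1"
    and x_pos: "0 < x 1"
    and x_incr: "\<And>i. 1 \<le> i \<Longrightarrow> i < n \<Longrightarrow> x i < x (Suc i)"
    and a_pos: "\<And>i. i \<in> {1..n} \<Longrightarrow> a i > 0"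
begin

abbreviation "g \<equiv> gg n a x"
abbreviation "P \<equiv> PP n x"
abbreviation "Q \<equiv> QQ n a x"

lemma x_mono_aux: "1 \<le> i \<Longrightarrow> i + k < n \<Longrightarrow> x i < x (Suc (i + k))"
proof (induction k)
  case 0 then show ?case using x_incr by simp
next
  case (Suc k)
  then have "x i < x (Suc (i + k))" by simp
  also have "\<dots> < x (Suc (Suc (i + k)))" using x_incr[of "Suc (i+k)"] Suc.prems by simp
  finally show ?case by simp
qed

lemma x_mono: "1 \<le> i \<Longrightarrow> i < j \<Longrightarrow> j \<le> n \<Longrightarrow> x i < x j"
  using x_mono_aux[of i "j - i - 1"] by simp

lemma x_le: "1 \<le> i \<Longrightarrow> i \<le> j \<Longrightarrow> j \<le> n \<Longrightarrow> x i \<le> x j"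
  using x_mono[of i j] by (cases "i = j") auto

lemma x_gt0: "i \<in> {1..n} \<Longrightarrow> x i > 0"
  using x_le[of 1 i] x_pos by auto

lemma x_inj: "inj_on x {1..n}"
proof (rule inj_onI)
  fix i j assume "i \<in> {1..n}" "j \<in> {1..n}" "x i = x j"
  then show "i = j" using x_mono[of i j] x_mono[of j i] by (cases i j rule: linorder_cases) auto
qed

lemma gP_eq_Q:
  fixes z :: "'a::real_normed_field"
  assumes "\<forall>j\<in>{1..n}. of_real (x j) \<noteq> z"
  shows "g z * P z = Q z"
proof -
  have "g z * P z = (\<Sum>i\<in>{1..n}. of_real (a i) / (of_real (x i) - z) * P z)"
    by (simp add: gg_def sum_distrib_right)
  also have "\<dots> = Q z" unfolding QQ_def
  proof (rule sum.cong[OF refl])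
    fix i assume i: "i \<in> {1..n}"
    have "P z = (of_real (x i) - z) * (\<Prod>k\<in>{1..n}-{i}. (of_real (x k) - z))"
      unfolding PP_def using i by (simp add: prod.remove)
    moreover have "of_real (x i) - z \<noteq> 0" using assms i by auto
    ultimately show "of_real (a i) / (of_real (x i) - z) * P z = of_real (a i) * (\<Prod>k\<in>{1..n}-{i}. (of_real (x k) - z))"
      by simp
  qed
  finally show ?thesis .
qed

lemma P_nz:
  fixes z :: "'a::real_normed_field"
  assumes "\<forall>j\<in>{1..n}. of_real (x j) \<noteq> z"
  shows "P z \<noteq> 0"
  using assms unfolding PP_def by (auto simp: prod_zero_iff)

lemma Q_xj:
  assumes j: "j \<in> {1..n}"
  shows "Q (of_real (x j) :: 'a::real_normed_field) \<noteq> 0"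
proof -
  let ?z = "of_real (x j) :: 'a"
  have eq: "Q ?z = of_real (a j) * (\<Prod>k\<in>{1..n}-{j}. (of_real (x k) - ?z)) + 
     (\<Sum>i\<in>{1..n}-{j}. of_real (a i) * (\<Prod>k\<in>{1..n}-{i}. (of_real (x k) - ?z)))"
    unfolding QQ_def using j by (simp add: sum.remove)
  have z: "(\<Sum>i\<in>{1..n}-{j}. of_real (a i) * (\<Prod>k\<in>{1..n}-{i}. (of_real (x k) - ?z))) = 0"
    by (rule sum.neutral) (use j in \<open>auto simp: prod_zero_iff\<close>)
  have "(\<Prod>k\<in>{1..n}-{j}. (of_real (x k) - ?z)) \<noteq> 0"
  proof -
    have "\<forall>k\<in>{1..n}-{j}. x k \<noteq> x j" using x_inj j by (auto dest: inj_onD)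
    then show ?thesis by (auto simp: prod_zero_iff)
  qed
  then have "of_real (a j) * (\<Prod>k\<in>{1..n}-{j}. (of_real (x k) - ?z)) \<noteq> 0"
    using a_pos[OF j] by simp
  then show ?thesis using eq z by simp
qed

lemma g_of_real: "g (complex_of_real t) = complex_of_real (g t)"
  by (simp add: gg_def)
lemma P_of_real: "P (complex_of_real t) = complex_of_real (P t)"
  by (simp add: PP_def)
lemma Q_of_real: "Q (complex_of_real t) = complex_of_real (Q t)"
  by (simp add: QQ_def)

lemma Im_g:
  assumes "Im z \<noteq> 0"
  shows "g z \<noteq> 0"
proof -
  have eq: "Im (g z) = (\<Sum>i\<in>{1..n}. a i * Im z / ((x i - Re z)^2 + (Im z)^2))"
    by (simp add: gg_def Im_divide power2_eq_square)
  have pos: "(\<Sum>i\<in>{1..n}. a i / ((x i - Re z)^2 + (Im z)^2)) > 0"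
    using n_pos a_pos assms by (intro sum_pos) (auto intro!: divide_pos_pos add_nonneg_pos)
  have "Im (g z) = Im z * (\<Sum>i\<in>{1..n}. a i / ((x i - Re z)^2 + (Im z)^2))"
    unfolding eq sum_distrib_left by (rule sum.cong) auto
  then have "Im (g z) \<noteq> 0" using pos assms by simp
  then show ?thesis by auto
qed

end


context cfg begin

lemma g_real_left: "t < x 1 \<Longrightarrow> g t > (0::real)"
  unfolding gg_def using n_pos
proof (intro sum_pos)
  fix i assume "t < x 1" "i \<in> {1..n}"
  then have "t < x i" using x_le[of 1 i] by auto
  then show "of_real (a i) / (of_real (x i) - t) > (0::real)" using a_pos \<open>i \<in> {1..n}\<close> by simp
qed auto

lemma g_real_right: "t > x n \<Longrightarrow> g t < (0::real)"
proof -
  assume t: "t > x n"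
  have "(\<Sum>i\<in>{1..n}. a i / (t - x i)) > 0"
    using n_pos t
  proof (intro sum_pos)
    fix i assume "i \<in> {1..n}"
    then have "t > x i" using x_le[of i n] t by auto
    then show "a i / (t - x i) > 0" using a_pos \<open>i \<in> {1..n}\<close> by simp
  qed auto
  moreover have "g t = - (\<Sum>i\<in>{1..n}. a i / (t - x i))"
    unfolding gg_def sum_negf[symmetric] by (rule sum.cong) (auto simp: minus_divide_right)
  ultimately show ?thesis by simp
qed

lemma g_strict_mono:
  assumes i: "1 \<le> i" "i < n" and st: "x i < s" "s < t" "t < x (Suc i)"
  shows "g s < (g t :: real)"
proof -
  have "g t - g s = (\<Sum>j\<in>{1..n}. a j * (t - s) / ((x j - t) * (x j - s)))"
    unfolding gg_def sum_subtractf[symmetric]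
  proof (rule sum.cong[OF refl])
    fix j assume j: "j \<in> {1..n}"
    have "x j \<noteq> t" "x j \<noteq> s"
    proof -
      { assume "j \<le> i" then have "x j \<le> x i" using x_le[of j i] j i by auto }
      moreover { assume "j \<ge> Suc i" then have "x (Suc i) \<le> x j" using x_le[of "Suc i" j] j i by auto }
      ultimately show "x j \<noteq> t" "x j \<noteq> s" using st by (cases "j \<le> i"; force)+
    qed
    then show "of_real (a j) / (of_real (x j) - t) - of_real (a j) / (of_real (x j) - s) =
        a j * (t - s) / ((x j - t) * (x j - s))"
      by (simp add: field_simps)
  qed
  also have "\<dots> > 0"
  proof (rule sum_pos)
    fix j assume j: "j \<in> {1..n}"
    have "(x j - t) * (x j - s) > 0"
    proof (cases "j \<le> i")
      case True
      then have "x j \<le> x i" using x_le[of j i] j i by auto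
      then show ?thesis using st by (intro mult_neg_neg) auto
    next
      case False
      then have "x (Suc i) \<le> x j" using x_le[of "Suc i" j] j i by auto
      then show ?thesis using st by (intro mult_pos_pos) auto
    qed
    moreover have "a j * (t - s) > 0" using a_pos[OF j] st by simp
    ultimately show "a j * (t - s) / ((x j - t) * (x j - s)) > 0"
      by (rule divide_pos_pos[rotated])
  qed (use n_pos in auto)
  finally show ?thesis by simp
qed

lemma g_root_exists:
  assumes i: "1 \<le> i" "i < n"
  shows "\<exists>t. x i < t \<and> t < x (Suc i) \<and> g t = (0::real)"
proof -
  define J where "J = {1..n} - {i, Suc i}"
  have xi: "x i < x (Suc i)" using x_incr i by auto
  have Jout: "x j < x i \<or> x j > x (Suc i)" if "j \<in> J" for j
  proof (cases "j < i")
    case True then show ?thesis using x_mono[of j i] that i by (auto simp: J_def)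
  next
    case False then have "j > Suc i" using that by (auto simp: J_def)
    then show ?thesis using x_mono[of "Suc i" j] that i by (auto simp: J_def)
  qed
  define h where "h t = (t - x i) * (x (Suc i) - t) * (\<Sum>j\<in>J. a j / (x j - t))
       - a i * (x (Suc i) - t) + a (Suc i) * (t - x i)" for t
  have cont: "continuous_on {x i..x (Suc i)} h"
    unfolding h_def
    by (intro continuous_intros) (use Jout in force)
  have "h (x i) \<le> 0" using a_pos[of i] i xi by (simp add: h_def)
  moreover have "0 \<le> h (x (Suc i))" using a_pos[of "Suc i"] i xi by (simp add: h_def)
  ultimately obtain t where t: "x i \<le> t" "t \<le> x (Suc i)" "h t = 0"
    using IVT'[of h "x i" 0 "x (Suc i)"] cont xi by auto
  have "t \<noteq> x i" using t a_pos[of i] i xi by (auto simp: h_def)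
  moreover have "t \<noteq> x (Suc i)" using t a_pos[of "Suc i"] i xi by (auto simp: h_def)
  ultimately have t': "x i < t" "t < x (Suc i)" using t by auto
  have split: "{1..n} = insert i (insert (Suc i) J)" using i by (auto simp: J_def)
  have "g t = a i / (x i - t) + (a (Suc i) / (x (Suc i) - t) + (\<Sum>j\<in>J. a j / (x j - t)))"
    unfolding gg_def split by (simp add: J_def)
  also have "(t - x i) * (x (Suc i) - t) * \<dots> = h t"
  proof -
    have n1: "x i - t \<noteq> 0" "x (Suc i) - t \<noteq> 0" using t' by auto
    have "(t - x i) * (x (Suc i) - t) * (a i / (x i - t) + (a (Suc i) / (x (Suc i) - t) + S)) =
      (t - x i) * (x (Suc i) - t) * S - a i * (x (Suc i) - t) + a (Suc i) * (t - x i)" for S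
    proof -
      have e1: "(t - x i) * (x (Suc i) - t) * (a i / (x i - t)) = - a i * (x (Suc i) - t)"
        using n1 by (simp add: field_simps)
      have e2: "(t - x i) * (x (Suc i) - t) * (a (Suc i) / (x (Suc i) - t)) = a (Suc i) * (t - x i)"
        using n1 by (simp add: field_simps)
      have "(t - x i) * (x (Suc i) - t) * (a i / (x i - t) + (a (Suc i) / (x (Suc i) - t) + S)) =
        (t - x i) * (x (Suc i) - t) * (a i / (x i - t)) + (t - x i) * (x (Suc i) - t) * (a (Suc i) / (x (Suc i) - t))
        + (t - x i) * (x (Suc i) - t) * S" by (simp add: algebra_simps)
      then show ?thesis unfolding e1 e2 by simp
    qed
    then show ?thesis unfolding h_def by simp
  qed
  finally have "(t - x i) * (x (Suc i) - t) * g t = 0" using t by simp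
  then have "g t = 0" using t' by simp
  then show ?thesis using t' by blast
qed

lemma g_zero_cases:
  assumes "g t = (0::real)" "t \<notin> x ` {1..n}"
  shows "\<exists>i\<in>{1..<n}. x i < t \<and> t < x (Suc i)"
proof -
  have "\<not> t < x 1" using g_real_left assms by force
  moreover have "t \<noteq> x 1" using assms n_pos by force
  ultimately have t1: "x 1 < t" by simp
  have "\<not> t > x n" using g_real_right assms by force
  moreover have "t \<noteq> x n" using assms n_pos by force
  ultimately have tn: "t < x n" by simp
  define A where "A = {j\<in>{1..n}. x j < t}"
  have A: "finite A" "1 \<in> A" using t1 n_pos by (auto simp: A_def)
  define i where "i = Max A"
  have iA: "i \<in> A" using A unfolding i_def by (intro Max_in) auto
  have "i \<noteq> n" using iA tn by (auto simp: A_def)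
  then have "i < n" "1 \<le> i" using iA by (auto simp: A_def)
  moreover have "Suc i \<notin> A"
  proof
    assume "Suc i \<in> A" then have "Suc i \<le> i" using A(1) Max_ge unfolding i_def by blast
    then show False by simp
  qed
  then have "t \<le> x (Suc i)" using \<open>i < n\<close> \<open>1 \<le> i\<close> by (auto simp: A_def)
  moreover have "x (Suc i) \<noteq> t" using assms \<open>i < n\<close> \<open>1 \<le> i\<close> by force
  ultimately show ?thesis using iA by (auto simp: A_def)
qed

end



lemma fin_supp_integral:
  fixes M :: "real measure" and f :: "real \<Rightarrow> 'b::{banach,second_countable_topology}"
  assumes sets: "sets M = sets borel" and fin: "finite S" and null: "emeasure M (UNIV - S) = 0"
    and pt: "\<And>p. p \<in> S \<Longrightarrow> emeasure M {p} < \<infinity>"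
    and meas: "f \<in> borel_measurable borel"
  shows "integral\<^sup>L M f = (\<Sum>p\<in>S. measure M {p} *\<^sub>R f p)"
proof -
  have sp: "space M = UNIV" using sets_eq_imp_space_eq[OF sets] by simp
  have "UNIV - S \<in> sets M" using fin sets by (simp add: finite_imp_closed borel_closed)
  then have "UNIV - S \<in> null_sets M" using null by (simp add: null_setsI)
  then have AE: "AE s in M. s \<in> S" by (rule AE_I') (auto simp: sp)
  have mc: "borel_measurable M = (borel_measurable borel :: (real \<Rightarrow> 'b) set)" by (rule measurable_cong_sets[OF sets refl])
  have fm: "f \<in> borel_measurable M" using meas mc by simp
  have "integral\<^sup>L M f = integral\<^sup>L M (\<lambda>s. \<Sum>p\<in>S. indicator {p} s *\<^sub>R f p)"
  proof (rule integral_cong_AE)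
    show "(\<lambda>s. \<Sum>p\<in>S. indicator {p} s *\<^sub>R f p) \<in> borel_measurable M"
      unfolding mc by (intro borel_measurable_sum borel_measurable_scaleR) auto
    show "AE s in M. f s = (\<Sum>p\<in>S. indicator {p} s *\<^sub>R f p)"
      using AE
    proof eventually_elim
      case (elim s)
      have "(\<Sum>p\<in>S. indicator {p} s *\<^sub>R f p) = (\<Sum>p\<in>S. if s = p then f p else 0)"
        by (intro sum.cong) (auto simp: indicator_def)
      also have "\<dots> = f s" using elim fin by (simp add: sum.delta)
      finally show ?case by simp
    qed
  qed (rule fm)
  also have "\<dots> = (\<Sum>p\<in>S. integral\<^sup>L M (\<lambda>s. indicator {p} s *\<^sub>R f p))"
  proof -
    have ints: "integrable M (\<lambda>s. indicator {p} s *\<^sub>R f p)" if p: "p \<in> S" for p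
    proof -
      have "{p} \<in> sets M" using sets by simp
      then have "integrable M (indicator {p} :: real \<Rightarrow> real)"
        using pt[OF p] by (simp add: integrable_indicator_iff sp)
      then show ?thesis by (rule integrable_scaleR_left)
    qed
    show ?thesis using ints by simp
  qed
  also have "\<dots> = (\<Sum>p\<in>S. measure M {p} *\<^sub>R f p)"
  proof (rule sum.cong[OF refl])
    fix p assume p: "p \<in> S"
    have "{p} \<in> sets M" using sets by simp
    then show "integral\<^sup>L M (\<lambda>s. indicator {p} s *\<^sub>R f p) = measure M {p} *\<^sub>R f p"
      using pt[OF p] by (simp add: integral_scaleR_left)
  qed
  finally show ?thesis .
qed

lemma fin_supp_nn_integral:
  fixes M :: "real measure" and f :: "real \<Rightarrow> ennreal"
  assumes sets: "sets M = sets borel" and fin: "finite S" and null: "emeasure M (UNIV - S) = 0"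
  shows "(\<integral>\<^sup>+ s. f s \<partial>M) = (\<Sum>p\<in>S. f p * emeasure M {p})"
proof -
  have sp: "space M = UNIV" using sets_eq_imp_space_eq[OF sets] by simp
  have "UNIV - S \<in> sets M" using fin sets by (simp add: finite_imp_closed borel_closed)
  then have "UNIV - S \<in> null_sets M" using null by (simp add: null_setsI)
  then have AE: "AE s in M. s \<in> S" by (rule AE_I') (auto simp: sp)
  have "(\<integral>\<^sup>+ s. f s \<partial>M) = (\<integral>\<^sup>+ s. (\<Sum>p\<in>S. f p * indicator {p} s) \<partial>M)"
  proof (rule nn_integral_cong_AE)
    show "AE s in M. f s = (\<Sum>p\<in>S. f p * indicator {p} s)"
      using AE
    proof eventually_elim
      case (elim s)
      have "(\<Sum>p\<in>S. f p * indicator {p} s) = (\<Sum>p\<in>S. if s = p then f p else 0)"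
        by (intro sum.cong) (auto simp: indicator_def)
      also have "\<dots> = f s" using elim fin by (simp add: sum.delta)
      finally show ?case by simp
    qed
  qed
  also have "\<dots> = (\<Sum>p\<in>S. (\<integral>\<^sup>+ s. f p * indicator {p} s \<partial>M))"
  proof (rule nn_integral_sum)
    have mc: "borel_measurable M = (borel_measurable borel :: (real \<Rightarrow> ennreal) set)" by (rule measurable_cong_sets[OF sets refl])
    show "(\<lambda>s. f p * indicator {p} s) \<in> borel_measurable M" for p unfolding mc by simp
  qed
  also have "\<dots> = (\<Sum>p\<in>S. f p * emeasure M {p})"
    using sets by (intro sum.cong refl) (simp add: nn_integral_cmult_indicator)
  finally show ?thesis .
qed

lemma Im_inv_shift: "Im (1 / (complex_of_real s - Complex c e)) = e / ((s - c)^2 + e^2)"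
  by (simp add: Im_divide power2_eq_square)

lemma interval_bound:
  fixes \<nu> :: "real measure"
  assumes sets: "sets \<nu> = sets borel" and e: "e > 0"
    and int: "integrable \<nu> (\<lambda>s. 1 / (complex_of_real s - Complex c e))"
  shows "emeasure \<nu> {c - e .. c + e} \<le> ennreal (2 * e * Im (stieltjes \<nu> (Complex c e)))"
proof -
  define \<phi> where "\<phi> s = 2 * e * Im (1 / (complex_of_real s - Complex c e))" for s
  have intphi: "integrable \<nu> \<phi>" unfolding \<phi>_def using int by (intro integrable_mult_right integrable_Im)
  have phinn: "\<phi> s \<ge> 0" for s unfolding \<phi>_def Im_inv_shift using e
    by (intro mult_nonneg_nonneg divide_nonneg_pos add_nonneg_pos) auto
  have ind: "indicator {c-e..c+e} s \<le> \<phi> s" for s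
  proof (cases "s \<in> {c-e..c+e}")
    case True
    then have "\<bar>s - c\<bar> \<le> e" by auto
    then have "(s - c)^2 \<le> e^2" using e by (metis abs_le_square_iff abs_of_pos)
    have D: "(s-c)^2 + e^2 > 0" using e by (simp add: add_nonneg_pos)
    have "(s-c)^2 + e^2 \<le> 2*e*e" using \<open>(s - c)^2 \<le> e^2\<close> by (simp add: power2_eq_square)
    then have "1 \<le> (2*e*e) / ((s-c)^2+e^2)" using D by (simp add: le_divide_eq)
    then have "1 \<le> 2 * e * (e / ((s - c)^2 + e^2))" by simp
    then show ?thesis using True unfolding \<phi>_def Im_inv_shift by simp
  next
    case False then show ?thesis using phinn by simp
  qed
  have "emeasure \<nu> {c - e .. c + e} = (\<integral>\<^sup>+ s. indicator {c-e..c+e} s \<partial>\<nu>)"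
    using sets by (simp add: nn_integral_indicator)
  also have "\<dots> \<le> (\<integral>\<^sup>+ s. ennreal (\<phi> s) \<partial>\<nu>)"
  proof (intro nn_integral_mono)
    fix s
    show "indicator {c-e..c+e} s \<le> ennreal (\<phi> s)"
    proof (cases "s \<in> {c-e..c+e}")
      case True
      then have "1 \<le> \<phi> s" using ind[of s] by simp
      then have "ennreal 1 \<le> ennreal (\<phi> s)" by (rule ennreal_leI)
      then show ?thesis using True by simp
    qed simp
  qed
  also have "\<dots> = ennreal (integral\<^sup>L \<nu> \<phi>)"
    using intphi phinn by (intro nn_integral_eq_integral) auto
  also have "integral\<^sup>L \<nu> \<phi> = 2 * e * Im (stieltjes \<nu> (Complex c e))"
    unfolding \<phi>_def stieltjes_def using int by simp
  finally show ?thesis .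
qed

lemma cover_bound:
  fixes \<nu> :: "real measure"
  assumes sets: "sets \<nu> = sets borel" and r: "r > 0" and d: "d > 0" and eta: "\<eta> \<ge> 0"
    and bnd: "\<And>c e. c \<in> {p - r .. p + r} \<Longrightarrow> 0 < e \<Longrightarrow> e < d \<Longrightarrow> emeasure \<nu> {c - e .. c + e} \<le> ennreal (2 * e * \<eta>)"
  shows "emeasure \<nu> {p - r .. p + r} \<le> ennreal (2 * r * \<eta>)"
proof -
  obtain N :: nat where N: "r / d < N" using reals_Archimedean2 by blast
  have "0 < r / d" using r d by simp
  then have "0 < real N" using N by linarith
  then have N0: "N > 0" by simp
  define e where "e = r / N"
  have e: "e > 0" "e < d" "e \<le> r" using N N0 r d
    by (auto simp: e_def field_simps)
  have Ne: "real N * e = r" using N0 by (simp add: e_def)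
  have claim: "emeasure \<nu> {p - r .. p - r + 2 * m * e} \<le> ennreal (2 * e * \<eta> * m)" if "1 \<le> m" "m \<le> N" for m :: nat
    using that
  proof (induction m rule: nat_induct_at_least)
    case base
    have "emeasure \<nu> {p - r .. p - r + 2 * 1 * e} = emeasure \<nu> {(p - r + e) - e .. (p - r + e) + e}"
      by (simp add: algebra_simps)
    also have "\<dots> \<le> ennreal (2 * e * \<eta>)" using e by (intro bnd) auto
    finally show ?case by simp
  next
    case (Suc m)
    define c where "c = p - r + (2 * m + 1) * e"
    have "real (Suc m) \<le> N" using Suc by simp
    then have "(2*real m+1)*e \<le> 2*real N * e" using e(1) by (intro mult_right_mono) auto
    then have cin: "c \<in> {p - r .. p + r}" using e Ne
      by (auto simp: c_def algebra_simps)
    have sub: "{p - r .. p - r + 2 * Suc m * e} \<subseteq> {p - r .. p - r + 2 * m * e} \<union> {c - e .. c + e}"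
      by (auto simp: c_def algebra_simps)
    have "emeasure \<nu> {p - r .. p - r + 2 * Suc m * e} \<le> emeasure \<nu> ({p - r .. p - r + 2 * m * e} \<union> {c - e .. c + e})"
      by (rule emeasure_mono[OF sub]) (simp add: sets)
    also have "\<dots> \<le> emeasure \<nu> {p - r .. p - r + 2 * m * e} + emeasure \<nu> {c - e .. c + e}"
      by (rule emeasure_subadditive) (simp_all add: sets)
    also have "\<dots> \<le> ennreal (2 * e * \<eta> * m) + ennreal (2 * e * \<eta>)"
      using Suc cin e by (intro add_mono bnd) auto
    also have "\<dots> = ennreal (2 * e * \<eta> * Suc m)"
      using e eta by (simp add: ennreal_plus[symmetric] algebra_simps del: ennreal_plus)
    finally show ?case .
  qed
  have "emeasure \<nu> {p - r .. p - r + 2 * N * e} \<le> ennreal (2 * e * \<eta> * N)"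
    using claim[of N] N0 by simp
  moreover have "2 * real N * e = 2 * r" using Ne by (simp add: mult.assoc)
  then have eq1: "p - r + 2 * N * e = p + r" and eq2: "2 * e * \<eta> * N = 2 * r * \<eta>" by (auto simp: algebra_simps)
  ultimately show ?thesis unfolding eq1 eq2 by blast
qed




locale cfg2 = cfg +
  fixes \<mu> \<nu> :: "real measure"
  assumes \<mu>_sets: "sets \<mu> = sets borel"
    and \<mu>_def: "\<And>A. A \<in> sets borel \<Longrightarrow> emeasure \<mu> A = ennreal (\<Sum>i\<in>{1..n}. a i * indicator A (x i))"
    and \<nu>_sets: "sets \<nu> = sets borel"
    and \<nu>_integrable: "\<And>z. Im z \<noteq> 0 \<Longrightarrow> integrable \<nu> (\<lambda>s. 1 / (complex_of_real s - z))"
    and \<nu>_stieltjes: "\<And>z. Im z \<noteq> 0 \<Longrightarrow> (1 + stieltjes \<nu> z) * stieltjes \<mu> z = - 1 / z"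
begin

lemma meas_inv: "(\<lambda>s. 1 / (complex_of_real s - z)) \<in> borel_measurable borel"
  by measurable

lemma mu_point: "j \<in> {1..n} \<Longrightarrow> emeasure \<mu> {x j} = ennreal (a j)"
proof -
  assume j: "j \<in> {1..n}"
  have "(\<Sum>i\<in>{1..n}. a i * indicator {x j} (x i)) = (\<Sum>i\<in>{1..n}. if i = j then a i else 0)"
    using j x_inj by (intro sum.cong) (auto simp: indicator_def dest: inj_onD)
  also have "\<dots> = a j" using j by simp
  finally show ?thesis using \<mu>_def[of "{x j}"] by simp
qed

lemma stieltjes_mu: "stieltjes \<mu> z = g z"
proof -
  let ?S = "x ` {1..n}"
  have null: "emeasure \<mu> (UNIV - ?S) = 0"
  proof -
    have "UNIV - ?S \<in> sets borel" by (simp add: finite_imp_closed borel_closed)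
    then show ?thesis using \<mu>_def[of "UNIV - ?S"] by (simp add: indicator_def)
  qed
  have pt: "emeasure \<mu> {p} < \<infinity>" if "p \<in> ?S" for p using that mu_point by auto
  have "stieltjes \<mu> z = (\<Sum>p\<in>?S. measure \<mu> {p} *\<^sub>R (1 / (complex_of_real p - z)))"
    unfolding stieltjes_def by (rule fin_supp_integral[OF \<mu>_sets _ null pt meas_inv]) auto
  also have "\<dots> = (\<Sum>i\<in>{1..n}. measure \<mu> {x i} *\<^sub>R (1 / (complex_of_real (x i) - z)))"
    by (rule sum.reindex[OF x_inj, unfolded comp_def])
  also have "\<dots> = g z" unfolding gg_def
  proof (rule sum.cong[OF refl])
    fix i assume i: "i \<in> {1..n}"
    have "measure \<mu> {x i} = a i" using mu_point[OF i] a_pos[OF i] by (simp add: measure_def)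
    then show "measure \<mu> {x i} *\<^sub>R (1 / (complex_of_real (x i) - z)) = of_real (a i) / (of_real (x i) - z)"
      by (simp add: scaleR_conv_of_real)
  qed
  finally show ?thesis .
qed

lemma stieltjes_nu: "Im z \<noteq> 0 \<Longrightarrow> stieltjes \<nu> z = - 1 / (z * g z) - 1"
proof -
  assume z: "Im z \<noteq> 0"
  have g0: "g z \<noteq> 0" using Im_g[OF z] .
  have z0: "z \<noteq> 0" using z by auto
  have "(1 + stieltjes \<nu> z) * g z = - 1 / z" using \<nu>_stieltjes[OF z] stieltjes_mu by simp
  then have "1 + stieltjes \<nu> z = - 1 / (z * g z)" using g0 z0 by (simp add: field_simps)
  then show ?thesis by (simp add: algebra_simps)
qed

definition F :: "complex \<Rightarrow> complex" where "F z = - P z / (z * Q z) - 1"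

lemma nonreal_not_x: "Im z \<noteq> 0 \<Longrightarrow> \<forall>j\<in>{1..n}. complex_of_real (x j) \<noteq> z"
  by auto

lemma stieltjes_nu_F: "Im z \<noteq> 0 \<Longrightarrow> stieltjes \<nu> z = F z"
proof -
  assume z: "Im z \<noteq> 0"
  have gPQ: "g z * P z = Q z" by (rule gP_eq_Q[OF nonreal_not_x[OF z]])
  have P0: "P z \<noteq> 0" by (rule P_nz[OF nonreal_not_x[OF z]])
  have g0: "g z \<noteq> 0" using Im_g[OF z] .
  have z0: "z \<noteq> 0" using z by auto
  have "- 1 / (z * g z) = - P z / (z * Q z)" unfolding gPQ[symmetric] using P0 g0 z0 by (simp add: field_simps)
  then show ?thesis unfolding stieltjes_nu[OF z] F_def by simp
qed

lemma Im_F_real: "Im (F (complex_of_real c)) = 0"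
  unfolding F_def P_of_real Q_of_real by (simp add: Im_divide)

definition yy :: "nat \<Rightarrow> real" where
  "yy i = (THE t. x i < t \<and> t < x (Suc i) \<and> g t = 0)"

lemma root_unique:
  assumes i: "1 \<le> i" "i < n" and s: "x i < s" "s < x (Suc i)" "g s = (0::real)"
    and t: "x i < t" "t < x (Suc i)" "g t = (0::real)"
  shows "s = t"
proof (rule ccontr)
  assume "s \<noteq> t"
  then consider "s < t" | "t < s" by linarith
  then show False
  proof cases
    case 1 then show False using g_strict_mono[OF i s(1) 1 t(2)] s t by simp
  next
    case 2 then show False using g_strict_mono[OF i t(1) 2 s(2)] s t by simp
  qed
qed

lemma yy: assumes "i \<in> {1..<n}" shows "x i < yy i" "yy i < x (Suc i)" "g (yy i) = (0::real)"
proof -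
  have ex: "\<exists>!t. x i < t \<and> t < x (Suc i) \<and> g t = (0::real)"
    using g_root_exists[of i] root_unique[of i] assms by auto
  show "x i < yy i" "yy i < x (Suc i)" "g (yy i) = (0::real)"
    using theI'[OF ex] unfolding yy_def by auto
qed

lemma yy_unique: "i \<in> {1..<n} \<Longrightarrow> x i < t \<Longrightarrow> t < x (Suc i) \<Longrightarrow> g t = (0::real) \<Longrightarrow> t = yy i"
  using root_unique[of i t "yy i"] yy[of i] by auto

lemma yy_pos: "i \<in> {1..<n} \<Longrightarrow> yy i > 0"
  using yy(1)[of i] x_gt0[of i] by auto

lemma yy_mono: "i \<in> {1..<n} \<Longrightarrow> j \<in> {1..<n} \<Longrightarrow> i < j \<Longrightarrow> yy i < yy j"
proof -
  assume i: "i \<in> {1..<n}" and j: "j \<in> {1..<n}" and ij: "i < j"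
  have "yy i < x (Suc i)" using yy(2)[OF i] .
  also have "x (Suc i) \<le> x j" using x_le[of "Suc i" j] ij j by auto
  also have "\<dots> < yy j" using yy(1)[OF j] .
  finally show ?thesis .
qed

lemma yy_inj: "inj_on yy {1..<n}"
proof (rule inj_onI)
  fix i j assume "i \<in> {1..<n}" "j \<in> {1..<n}" "yy i = yy j"
  then show "i = j" using yy_mono[of i j] yy_mono[of j i] by (cases i j rule: linorder_cases) auto
qed

abbreviation "S \<equiv> insert 0 (yy ` {1..<n})"

lemma real_zero_in_yy:
  assumes "g t = (0::real)" "t \<notin> x ` {1..n}"
  shows "t \<in> yy ` {1..<n}"
proof -
  obtain i where i: "i \<in> {1..<n}" "x i < t" "t < x (Suc i)" using g_zero_cases[OF assms] by blast
  then show ?thesis using yy_unique[OF i(1,2,3) assms(1)] by blast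
qed

lemma Q_nz_off_S:
  assumes "p \<notin> S"
  shows "complex_of_real p * Q (complex_of_real p) \<noteq> 0"
proof -
  have p0: "p \<noteq> 0" using assms by auto
  have "Q p \<noteq> (0::real)"
  proof (cases "p \<in> x ` {1..n}")
    case True
    then obtain j where "j \<in> {1..n}" "p = x j" by auto
    then show ?thesis using Q_xj[of j, where 'a=real] by (simp add: of_real_def)
  next
    case False
    then have nx: "\<forall>j\<in>{1..n}. of_real (x j) \<noteq> p" by auto
    have "g p \<noteq> (0::real)" using real_zero_in_yy[of p] False assms by auto
    moreover have "P p \<noteq> (0::real)" using P_nz[OF nx] .
    ultimately show ?thesis using gP_eq_Q[OF nx] by (metis mult_eq_0_iff)
  qed
  then show ?thesis using p0 by (simp add: Q_of_real)
qed

end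


context cfg2 begin

lemma local_null:
  assumes pS: "p \<notin> S"
  shows "\<exists>r>0. emeasure \<nu> {p - r .. p + r} = 0"
proof -
  let ?U = "{z::complex. z * Q z \<noteq> 0}"
  have cQ: "continuous_on A (Q :: complex \<Rightarrow> complex)" for A unfolding QQ_def by (intro continuous_intros)
  have cP: "continuous_on A (P :: complex \<Rightarrow> complex)" for A unfolding PP_def by (intro continuous_intros)
  have contQ: "continuous_on UNIV (\<lambda>z::complex. z * Q z)" by (intro continuous_intros cQ)
  have "open ?U" by (rule open_Collect_neq[OF contQ continuous_on_const])
  moreover have "complex_of_real p \<in> ?U" using Q_nz_off_S[OF pS] by simp
  ultimately obtain r0 where r0: "r0 > 0" "ball (complex_of_real p) r0 \<subseteq> ?U"
    using open_contains_ball by blast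
  define r where "r = r0 / 4"
  have r: "r > 0" using r0 by (simp add: r_def)
  have cb: "cball (complex_of_real p) (3 * r) \<subseteq> ?U"
    using r0 by (force simp: r_def)
  have contF: "continuous_on (cball (complex_of_real p) (3 * r)) F"
    unfolding F_def by (intro continuous_intros cQ cP) (use cb in auto)
  have ucont: "uniformly_continuous_on (cball (complex_of_real p) (3 * r)) F"
    by (rule compact_uniformly_continuous[OF contF compact_cball])
  have main: "emeasure \<nu> {p - r .. p + r} \<le> ennreal (2 * r * \<eta>)" if \<eta>: "\<eta> > 0" for \<eta>
  proof -
    obtain \<delta> where \<delta>: "\<delta> > 0" and H: "\<And>u v. u \<in> cball (complex_of_real p) (3 * r) \<Longrightarrow>
        v \<in> cball (complex_of_real p) (3 * r) \<Longrightarrow> dist v u < \<delta> \<Longrightarrow> dist (F v) (F u) < \<eta>"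
      using ucont[unfolded uniformly_continuous_on_def] \<eta> by metis
    show ?thesis
    proof (rule cover_bound[OF \<nu>_sets r, of "min \<delta> r"])
      show "min \<delta> r > 0" using \<delta> r by simp
      show "\<eta> \<ge> 0" using \<eta> by simp
      fix c e assume c: "c \<in> {p - r .. p + r}" and e: "0 < e" "e < min \<delta> r"
      have "dist (complex_of_real p) (Complex c e) \<le> \<bar>p - c\<bar> + \<bar>e\<bar>"
        unfolding dist_norm using cmod_le[of "complex_of_real p - Complex c e"] by simp
      then have zc: "Complex c e \<in> cball (complex_of_real p) (3 * r)" using c e by auto
      have cc: "complex_of_real c \<in> cball (complex_of_real p) (3 * r)"
        using c r by (auto simp: dist_norm simp flip: of_real_diff)
      have "dist (Complex c e) (complex_of_real c) = e"
        using e by (simp add: dist_norm complex_of_real_def cmod_def)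
      then have "dist (Complex c e) (complex_of_real c) < \<delta>" using e by simp
      then have "dist (F (Complex c e)) (F (complex_of_real c)) < \<eta>" using H[OF cc zc] by simp
      moreover have "Im (F (Complex c e)) \<le> dist (F (Complex c e)) (F (complex_of_real c))"
      proof -
        have "Im (F (Complex c e)) = Im (F (Complex c e) - F (complex_of_real c))"
          using Im_F_real[of c] by simp
        also have "\<dots> \<le> cmod (F (Complex c e) - F (complex_of_real c))"
          using abs_Im_le_cmod by (rule order_trans[OF abs_ge_self])
        finally show ?thesis by (simp add: dist_norm)
      qed
      ultimately have ImF: "Im (F (Complex c e)) \<le> \<eta>" by simp
      have Imnz: "Im (Complex c e) \<noteq> 0" using e by simp
      have "emeasure \<nu> {c - e .. c + e} \<le> ennreal (2 * e * Im (stieltjes \<nu> (Complex c e)))"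
        by (rule interval_bound[OF \<nu>_sets e(1) \<nu>_integrable[OF Imnz]])
      also have "stieltjes \<nu> (Complex c e) = F (Complex c e)" by (rule stieltjes_nu_F[OF Imnz])
      also have "ennreal (2 * e * Im (F (Complex c e))) \<le> ennreal (2 * e * \<eta>)"
        using ImF e by (intro ennreal_leI mult_left_mono) auto
      finally show "emeasure \<nu> {c - e .. c + e} \<le> ennreal (2 * e * \<eta>)" .
    qed
  qed
  have "emeasure \<nu> {p - r .. p + r} \<le> 0"
  proof (rule ennreal_le_epsilon)
    fix e :: real assume e: "0 < e"
    have "emeasure \<nu> {p - r .. p + r} \<le> ennreal (2 * r * (e / (2 * r)))"
      using main[of "e / (2 * r)"] e r by simp
    also have "2 * r * (e / (2 * r)) = e" using r by simp
    finally show "emeasure \<nu> {p - r .. p + r} \<le> 0 + ennreal e" by simp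
  qed
  then show ?thesis using r by auto
qed

lemma null_outside: "emeasure \<nu> (UNIV - S) = 0"
proof -
  define \<F> where "\<F> = {ball p r | p r. p \<notin> S \<and> r > 0 \<and> emeasure \<nu> {p - r .. p + r} = 0}"
  have opn: "\<And>B. B \<in> \<F> \<Longrightarrow> open B" by (auto simp: \<F>_def)
  obtain \<F>' where F': "\<F>' \<subseteq> \<F>" "countable \<F>'" "\<Union>\<F>' = \<Union>\<F>"
    using Lindelof[OF opn] by blast
  have cover: "UNIV - S \<subseteq> \<Union>\<F>"
  proof
    fix p assume "p \<in> UNIV - S"
    then obtain r where "r > 0" "emeasure \<nu> {p - r .. p + r} = 0" using local_null by blast
    then have "ball p r \<in> \<F>" using \<open>p \<in> UNIV - S\<close> by (auto simp: \<F>_def)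
    then show "p \<in> \<Union>\<F>" using \<open>r > 0\<close> by (meson UnionI centre_in_ball)
  qed
  have eachnull: "B \<in> null_sets \<nu>" if "B \<in> \<F>'" for B
  proof -
    have "B \<in> \<F>" using that F'(1) by blast
    then obtain p r where B: "B = ball p r" "emeasure \<nu> {p - r .. p + r} = 0"
      unfolding \<F>_def by blast
    have "{p - r .. p + r} \<in> null_sets \<nu>" using B(2) \<nu>_sets by (simp add: null_sets_def)
    moreover have "B \<in> sets \<nu>" using B(1) \<nu>_sets by simp
    moreover have "B \<subseteq> {p - r .. p + r}" using B(1) by (auto simp: dist_real_def)
    ultimately show ?thesis by (rule null_sets_subset)
  qed
  have "(\<Union>B\<in>\<F>'. B) \<in> null_sets \<nu>" by (rule null_sets_UN'[OF F'(2) eachnull])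
  then have "\<Union>\<F> \<in> null_sets \<nu>" using F'(3) by simp
  moreover have "UNIV - S \<in> sets \<nu>" using \<nu>_sets by (simp add: finite_imp_closed borel_closed)
  ultimately have "UNIV - S \<in> null_sets \<nu>" using cover by (rule null_sets_subset)
  then show ?thesis by (rule null_setsD1)
qed

lemma pt_fin: "emeasure \<nu> {p} < \<infinity>"
proof -
  have Imnz: "Im (Complex p 1) \<noteq> 0" by simp
  have "emeasure \<nu> {p} \<le> emeasure \<nu> {p - 1 .. p + 1}"
    by (rule emeasure_mono) (auto simp: \<nu>_sets)
  also have "\<dots> \<le> ennreal (2 * 1 * Im (stieltjes \<nu> (Complex p 1)))"
    using interval_bound[OF \<nu>_sets _ \<nu>_integrable[OF Imnz]] by simp
  also have "\<dots> < \<infinity>" by simp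
  finally show ?thesis .
qed

lemma stieltjes_nu_sum: "stieltjes \<nu> z = (\<Sum>q\<in>S. measure \<nu> {q} *\<^sub>R (1 / (complex_of_real q - z)))"
  unfolding stieltjes_def by (rule fin_supp_integral[OF \<nu>_sets _ null_outside pt_fin meas_inv]) auto

end



lemma real_islimpt_nonreal: "complex_of_real q islimpt {z. Im z \<noteq> 0}"
proof (rule islimpt_approachable[THEN iffD2], intro allI impI)
  fix e :: real assume e: "e > 0"
  have "dist (Complex q (e/2)) (complex_of_real q) = e / 2"
    using e by (simp add: dist_norm complex_of_real_def cmod_def)
  then show "\<exists>x'\<in>{z. Im z \<noteq> 0}. x' \<noteq> complex_of_real q \<and> dist x' (complex_of_real q) < e"
    using e by (intro bexI[of _ "Complex q (e/2)"]) (auto simp: complex_eq_iff)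
qed

context cfg2 begin

lemma lim_at:
  assumes q: "q \<in> S"
  shows "((\<lambda>z. (complex_of_real q - z) * stieltjes \<nu> z) \<longlongrightarrow> complex_of_real (measure \<nu> {q})) (at (complex_of_real q))"
proof -
  define G where "G z = complex_of_real (measure \<nu> {q}) +
     (\<Sum>q'\<in>S-{q}. measure \<nu> {q'} *\<^sub>R ((complex_of_real q - z) / (complex_of_real q' - z)))" for z
  have fin: "finite S" by simp
  have eq: "(complex_of_real q - z) * stieltjes \<nu> z = G z" if z: "z \<noteq> complex_of_real q" for z
  proof -
    have nz: "complex_of_real q - z \<noteq> 0" using z by simp
    have "(complex_of_real q - z) * stieltjes \<nu> z =
      (\<Sum>q'\<in>S. (complex_of_real q - z) * (measure \<nu> {q'} *\<^sub>R (1 / (complex_of_real q' - z))))"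
      unfolding stieltjes_nu_sum by (simp add: sum_distrib_left)
    also have "\<dots> = (complex_of_real q - z) * (measure \<nu> {q} *\<^sub>R (1 / (complex_of_real q - z))) +
       (\<Sum>q'\<in>S-{q}. (complex_of_real q - z) * (measure \<nu> {q'} *\<^sub>R (1 / (complex_of_real q' - z))))"
      using q fin by (subst sum.remove) auto
    also have "(complex_of_real q - z) * (measure \<nu> {q} *\<^sub>R (1 / (complex_of_real q - z))) = complex_of_real (measure \<nu> {q})"
      using nz by (simp add: scaleR_conv_of_real)
    also have "(\<Sum>q'\<in>S-{q}. (complex_of_real q - z) * (measure \<nu> {q'} *\<^sub>R (1 / (complex_of_real q' - z)))) =
       (\<Sum>q'\<in>S-{q}. measure \<nu> {q'} *\<^sub>R ((complex_of_real q - z) / (complex_of_real q' - z)))"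
      by (intro sum.cong refl) (simp add: scaleR_conv_of_real)
    finally show ?thesis unfolding G_def .
  qed
  have cont: "isCont G (complex_of_real q)"
    unfolding G_def by (intro continuous_intros) auto
  have Gq: "G (complex_of_real q) = complex_of_real (measure \<nu> {q})"
    unfolding G_def by simp
  have "(G \<longlongrightarrow> complex_of_real (measure \<nu> {q})) (at (complex_of_real q))"
    using cont Gq by (metis isContD)
  moreover have "eventually (\<lambda>z. G z = (complex_of_real q - z) * stieltjes \<nu> z) (at (complex_of_real q))"
    using eq by (auto simp: eventually_at_filter)
  ultimately show ?thesis by (rule Lim_transform_eventually)
qed

lemma mass_via_limit:
  assumes q: "q \<in> S"
    and L: "((\<lambda>z. (complex_of_real q - z) * stieltjes \<nu> z) \<longlongrightarrow> L) (at (complex_of_real q) within {z. Im z \<noteq> 0})"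
  shows "complex_of_real (measure \<nu> {q}) = L"
proof -
  have "((\<lambda>z. (complex_of_real q - z) * stieltjes \<nu> z) \<longlongrightarrow> complex_of_real (measure \<nu> {q})) (at (complex_of_real q) within {z. Im z \<noteq> 0})"
    using lim_at[OF q] by (rule tendsto_within_subset) simp
  moreover have "\<not> trivial_limit (at (complex_of_real q) within {z. Im z \<noteq> 0})"
    using real_islimpt_nonreal trivial_limit_within by blast
  ultimately show ?thesis using L tendsto_unique by blast
qed

lemma transform_nonreal:
  assumes "\<And>z. Im z \<noteq> 0 \<Longrightarrow> f z = h z" and "(h \<longlongrightarrow> L) (at w within {z. Im z \<noteq> 0})"
  shows "(f \<longlongrightarrow> L) (at w within {z. Im z \<noteq> 0})"
proof -
  have "eventually (\<lambda>z. h z = f z) (at w within {z. Im z \<noteq> 0})"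
    using assms(1) by (auto simp: eventually_at_filter)
  with assms(2) show ?thesis by (rule Lim_transform_eventually)
qed

end


context cfg2 begin

lemma mass0: "measure \<nu> {0} = 1 / (\<Sum>j\<in>{1..n}. a j / x j)"
proof -
  define g0 where "g0 = (\<Sum>j\<in>{1..n}. a j / x j)"
  have g0pos: "g0 > 0" unfolding g0_def using n_pos
    by (intro sum_pos) (auto intro!: divide_pos_pos a_pos x_gt0)
  have gc: "g (0::complex) = complex_of_real g0" unfolding gg_def g0_def by simp
  have eq: "(complex_of_real 0 - z) * stieltjes \<nu> z = 1 / g z + z" if z: "Im z \<noteq> 0" for z
  proof -
    have "g z \<noteq> 0" using Im_g[OF z] .
    moreover have "z \<noteq> 0" using z by auto
    ultimately show ?thesis unfolding stieltjes_nu[OF z] by (simp add: field_simps)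
  qed
  have contg: "isCont (g :: complex \<Rightarrow> complex) 0"
    unfolding gg_def using x_gt0 by (intro continuous_intros) force
  have gl: "(g \<longlongrightarrow> g 0) (at (0::complex) within {z. Im z \<noteq> 0})"
    using contg unfolding isCont_def by (rule tendsto_within_subset) simp
  have lim0: "((\<lambda>z. 1 / g z + z) \<longlongrightarrow> 1 / g 0 + 0) (at (0::complex) within {z. Im z \<noteq> 0})"
    using g0pos gc by (intro tendsto_intros gl) simp
  then have "((\<lambda>z. (complex_of_real 0 - z) * stieltjes \<nu> z) \<longlongrightarrow> 1 / g 0 + 0) (at (complex_of_real 0) within {z. Im z \<noteq> 0})"
    using transform_nonreal[where f="\<lambda>z. (complex_of_real 0 - z) * stieltjes \<nu> z", OF eq lim0] by simp
  then have "complex_of_real (measure \<nu> {0}) = 1 / g 0 + 0" by (intro mass_via_limit) auto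
  then have "complex_of_real (measure \<nu> {0}) = complex_of_real (1 / g0)" using gc by simp
  then show ?thesis unfolding g0_def of_real_eq_iff .
qed

end


context cfg2 begin

lemma yy_not_x: "i \<in> {1..<n} \<Longrightarrow> j \<in> {1..n} \<Longrightarrow> x j \<noteq> yy i"
proof -
  assume i: "i \<in> {1..<n}" and j: "j \<in> {1..n}"
  show ?thesis
  proof (cases "j \<le> i")
    case True then have "x j \<le> x i" using x_le[of j i] i j by auto
    then show ?thesis using yy(1)[OF i] by auto
  next
    case False then have "x (Suc i) \<le> x j" using x_le[of "Suc i" j] i j by auto
    then show ?thesis using yy(2)[OF i] by auto
  qed
qed

lemma massy:
  assumes i: "i \<in> {1..<n}"
  shows "measure \<nu> {yy i} = 1 / (yy i * (\<Sum>j\<in>{1..n}. a j / (x j - yy i)^2))"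
proof -
  define y where "y = yy i"
  define kr where "kr = (\<Sum>j\<in>{1..n}. a j / (x j - y)^2)"
  define k where "k z = (\<Sum>j\<in>{1..n}. complex_of_real (a j) / ((complex_of_real (x j) - z) * (complex_of_real (x j - y))))" for z
  have yx: "x j \<noteq> y" if "j \<in> {1..n}" for j using yy_not_x[OF i that] by (simp add: y_def)
  have krpos: "kr > 0" unfolding kr_def using n_pos yx
    by (intro sum_pos) (auto intro!: divide_pos_pos a_pos)
  have ypos: "y > 0" using yy_pos[OF i] by (simp add: y_def)
  have ky: "k (complex_of_real y) = complex_of_real kr"
    unfolding k_def kr_def by (simp add: power2_eq_square)
  have gy: "g y = (0::real)" using yy(3)[OF i] by (simp add: y_def)
  have gk: "g z = (z - complex_of_real y) * k z" if z: "Im z \<noteq> 0" for z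
  proof -
    have "g z = g z - complex_of_real (g y)" using gy by simp
    also have "\<dots> = (\<Sum>j\<in>{1..n}. complex_of_real (a j) / (complex_of_real (x j) - z) - complex_of_real (a j / (x j - y)))"
      unfolding gg_def by (simp add: sum_subtractf)
    also have "\<dots> = (\<Sum>j\<in>{1..n}. (z - complex_of_real y) * (complex_of_real (a j) / ((complex_of_real (x j) - z) * (complex_of_real (x j - y)))))"
    proof (intro sum.cong refl)
      fix j assume j: "j \<in> {1..n}"
      have n1: "complex_of_real (x j) - z \<noteq> 0" using z by auto
      have n2: "complex_of_real (x j - y) \<noteq> 0" using yx[OF j] by simp
      show "complex_of_real (a j) / (complex_of_real (x j) - z) - complex_of_real (a j / (x j - y)) =
        (z - complex_of_real y) * (complex_of_real (a j) / ((complex_of_real (x j) - z) * complex_of_real (x j - y)))"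
        using n1 n2 by (simp add: field_simps)
    qed
    also have "\<dots> = (z - complex_of_real y) * k z" unfolding k_def by (simp add: sum_distrib_left)
    finally show ?thesis .
  qed
  have eq: "(complex_of_real y - z) * stieltjes \<nu> z = 1 / (z * k z) - (complex_of_real y - z)" if z: "Im z \<noteq> 0" for z
  proof -
    have g0: "g z \<noteq> 0" using Im_g[OF z] .
    have z0: "z \<noteq> 0" using z by auto
    have zy: "z - complex_of_real y \<noteq> 0" using z by auto
    have k0: "k z \<noteq> 0" using g0 gk[OF z] by auto
    show ?thesis unfolding stieltjes_nu[OF z] gk[OF z] using z0 zy k0 by (simp add: field_simps)
  qed
  have contk: "isCont k (complex_of_real y)"
    unfolding k_def using yx by (intro continuous_intros) auto
  have "((\<lambda>z. 1 / (z * k z) - (complex_of_real y - z)) \<longlongrightarrow> 1 / (complex_of_real y * k (complex_of_real y)) - (complex_of_real y - complex_of_real y))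
      (at (complex_of_real y) within {z. Im z \<noteq> 0})"
  proof -
    have kl: "(k \<longlongrightarrow> k (complex_of_real y)) (at (complex_of_real y) within {z. Im z \<noteq> 0})"
      using contk unfolding isCont_def by (rule tendsto_within_subset) simp
    show ?thesis using ky krpos ypos by (intro tendsto_intros kl) simp
  qed
  then have "((\<lambda>z. (complex_of_real y - z) * stieltjes \<nu> z) \<longlongrightarrow> 1 / (complex_of_real y * k (complex_of_real y)) - (complex_of_real y - complex_of_real y))
      (at (complex_of_real y) within {z. Im z \<noteq> 0})"
    using eq by (rule transform_nonreal[rotated]) auto
  then have "complex_of_real (measure \<nu> {y}) = 1 / (complex_of_real y * k (complex_of_real y)) - (complex_of_real y - complex_of_real y)"
    using i by (intro mass_via_limit) (auto simp: y_def)
  then have "complex_of_real (measure \<nu> {y}) = complex_of_real (1 / (y * kr))" using ky by simp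
  then show ?thesis unfolding of_real_eq_iff y_def kr_def .
qed

end



lemma mean_eta_eq:
  assumes xpos: "\<And>i. i \<in> {1..n} \<Longrightarrow> x i > 0"
  shows "mean_eta (f_eta n a x) = (\<Sum>i\<in>{1..n}. a i / x i)"
proof -
  have each: "has_bochner_integral lborel (\<lambda>t. erlang_density 0 (x i) t * t) (1 / x i)" if i: "i \<in> {1..n}" for i
  proof (rule has_bochner_integral_nn_integral)
    show "(\<lambda>t. erlang_density 0 (x i) t * t) \<in> borel_measurable lborel"
      by (simp add: erlang_density_def)
    show "AE t in lborel. 0 \<le> erlang_density 0 (x i) t * t"
      using xpos[OF i] by (auto simp: erlang_density_def)
    show "0 \<le> 1 / x i" using xpos[OF i] by simp
    show "(\<integral>\<^sup>+ t. ennreal (erlang_density 0 (x i) t * t) \<partial>lborel) = ennreal (1 / x i)"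
      using nn_integral_erlang_ith_moment[OF xpos[OF i], of 0 1] by simp
  qed
  have "has_bochner_integral lborel (\<lambda>t. \<Sum>i\<in>{1..n}. a i * (erlang_density 0 (x i) t * t)) (\<Sum>i\<in>{1..n}. a i * (1 / x i))"
    using each by (intro has_bochner_integral_sum has_bochner_integral_mult_right) auto
  moreover have "(\<lambda>t. \<Sum>i\<in>{1..n}. a i * (erlang_density 0 (x i) t * t)) = (\<lambda>t. t * f_eta n a x t)"
  proof
    fix t :: real
    show "(\<Sum>i\<in>{1..n}. a i * (erlang_density 0 (x i) t * t)) = t * f_eta n a x t"
      by (cases "t > 0"; cases "t = 0") (auto simp: f_eta_def erlang_density_def sum_distrib_left algebra_simps intro!: sum.cong)
  qed
  ultimately have "has_bochner_integral lborel (\<lambda>t. t * f_eta n a x t) (\<Sum>i\<in>{1..n}. a i / x i)" by simp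
  then show ?thesis unfolding mean_eta_def by (rule has_bochner_integral_integral_eq)
qed






context cfg2 begin

lemma mass0_pos: "measure \<nu> {0} > 0"
proof -
  have "(\<Sum>j\<in>{1..n}. a j / x j) > 0" using n_pos
    by (intro sum_pos) (auto intro!: divide_pos_pos a_pos x_gt0)
  then show ?thesis unfolding mass0 by simp
qed

lemma massy_pos: "i \<in> {1..<n} \<Longrightarrow> measure \<nu> {yy i} > 0"
proof -
  assume i: "i \<in> {1..<n}"
  have "(\<Sum>j\<in>{1..n}. a j / (x j - yy i)^2) > 0" using n_pos yy_not_x[OF i]
    by (intro sum_pos) (auto intro!: divide_pos_pos a_pos)
  then show ?thesis unfolding massy[OF i] using yy_pos[OF i] by simp
qed

lemma emeasure_pos: "measure \<nu> {p} > 0 \<Longrightarrow> 0 < emeasure \<nu> {p} \<and> emeasure \<nu> {p} < \<infinity>"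
proof -
  assume m: "measure \<nu> {p} > 0"
  have "emeasure \<nu> {p} = ennreal (measure \<nu> {p})" using pt_fin[of p] by (intro emeasure_eq_ennreal_measure) auto
  then show ?thesis using m by simp
qed

lemma g_real: "g t = (\<Sum>j\<in>{1..n}. a j / (x j - t))"
  by (simp add: gg_def)

lemma H_formula:
  assumes lap: "\<And>t. t > 0 \<Longrightarrow> ennreal (renewal_H (f_eta n a x) t) = (\<integral>\<^sup>+ s. ennreal (exp (- t * s)) \<partial>\<nu>)"
    and t: "t > 0"
  shows "renewal_H (f_eta n a x) t = 1 / mean_eta (f_eta n a x) + (\<Sum>i\<in>{1..<n}. exp (- t * yy i) * measure \<nu> {yy i})"
proof -
  define V where "V = (\<Sum>p\<in>S. exp (- t * p) * measure \<nu> {p})"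
  have "ennreal (renewal_H (f_eta n a x) t) = (\<Sum>p\<in>S. ennreal (exp (- t * p)) * emeasure \<nu> {p})"
    unfolding lap[OF t] by (rule fin_supp_nn_integral[OF \<nu>_sets _ null_outside]) simp
  also have "\<dots> = (\<Sum>p\<in>S. ennreal (exp (- t * p) * measure \<nu> {p}))"
  proof (intro sum.cong refl)
    fix p
    have "emeasure \<nu> {p} = ennreal (measure \<nu> {p})" using pt_fin[of p] by (intro emeasure_eq_ennreal_measure) auto
    then show "ennreal (exp (- t * p)) * emeasure \<nu> {p} = ennreal (exp (- t * p) * measure \<nu> {p})"
      by (simp add: ennreal_mult)
  qed
  also have "\<dots> = ennreal V" unfolding V_def by (rule sum_ennreal) simp
  finally have eV: "ennreal (renewal_H (f_eta n a x) t) = ennreal V" .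
  have not0: "0 \<notin> yy ` {1..<n}" using yy_pos by force
  have V: "V = exp (- t * 0) * measure \<nu> {0} + (\<Sum>i\<in>{1..<n}. exp (- t * yy i) * measure \<nu> {yy i})"
  proof -
    have "(\<Sum>p\<in>yy ` {1..<n}. exp (- t * p) * measure \<nu> {p}) = (\<Sum>i\<in>{1..<n}. exp (- t * yy i) * measure \<nu> {yy i})"
      by (rule sum.reindex[OF yy_inj, unfolded comp_def])
    then show ?thesis unfolding V_def using not0 by simp
  qed
  have Vpos: "V > 0"
  proof -
    have "(\<Sum>i\<in>{1..<n}. exp (- t * yy i) * measure \<nu> {yy i}) \<ge> 0"
      by (intro sum_nonneg mult_nonneg_nonneg) auto
    then show ?thesis unfolding V using mass0_pos by simp
  qed
  have Hnn: "renewal_H (f_eta n a x) t \<ge> 0"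
  proof (rule ccontr)
    assume "\<not> ?thesis"
    then have "ennreal (renewal_H (f_eta n a x) t) = 0" by (simp add: ennreal_neg)
    then show False using eV Vpos by simp
  qed
  have HV: "renewal_H (f_eta n a x) t = V" using eV Hnn Vpos by simp
  have me: "mean_eta (f_eta n a x) = (\<Sum>j\<in>{1..n}. a j / x j)"
    by (rule mean_eta_eq) (rule x_gt0)
  show ?thesis unfolding HV V me mass0 by simp
qed

end



theorem corollary2:
  fixes n :: nat and x a :: "nat \<Rightarrow> real" and \<mu> \<nu> :: "real measure"
  assumes n_pos: "n \<ge> 1"
    and x_pos: "0 < x 1"
    and x_incr: "\<And>i. 1 \<le> i \<Longrightarrow> i < n \<Longrightarrow> x i < x (Suc i)"
    and a_pos: "\<And>i. i \<in> {1..n} \<Longrightarrow> a i > 0"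
    and a_sum: "(\<Sum>i\<in>{1..n}. a i) = 1"
    and \<mu>_sets: "sets \<mu> = sets borel"
    and \<mu>_def: "\<And>A. A \<in> sets borel \<Longrightarrow> emeasure \<mu> A = ennreal (\<Sum>i\<in>{1..n}. a i * indicator A (x i))"
    and \<nu>_sets: "sets \<nu> = sets borel"
    and \<nu>_nonneg: "emeasure \<nu> {..<0} = 0"
    and \<nu>_integrable: "\<And>z. Im z \<noteq> 0 \<Longrightarrow> integrable \<nu> (\<lambda>s. 1 / (complex_of_real s - z))"
    and \<nu>_stieltjes: "\<And>z. Im z \<noteq> 0 \<Longrightarrow> (1 + stieltjes \<nu> z) * stieltjes \<mu> z = - 1 / z"
    and \<nu>_laplace: "\<And>t. t > 0 \<Longrightarrow>
        ennreal (renewal_H (f_eta n a x) t) = (\<integral>\<^sup>+ s. ennreal (exp (- t * s)) \<partial>\<nu>)"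
  shows "(\<forall>z. Im z \<noteq> 0 \<longrightarrow>
            stieltjes \<nu> z = - 1 / (z * (\<Sum>i\<in>{1..n}. complex_of_real (a i) / (complex_of_real (x i) - z))) - 1)
    \<and> (\<exists>y :: nat \<Rightarrow> real.
          (\<forall>i\<in>{1..<n}. x i < y i \<and> y i < x (Suc i)
              \<and> (\<Sum>j\<in>{1..n}. a j / (x j - y i)) = 0
              \<and> (\<forall>t. x i < t \<and> t < x (Suc i) \<and> (\<Sum>j\<in>{1..n}. a j / (x j - t)) = 0 \<longrightarrow> t = y i))
        \<and> emeasure \<nu> (UNIV - insert 0 (y ` {1..<n})) = 0
        \<and> 0 < emeasure \<nu> {0} \<and> emeasure \<nu> {0} < \<infinity>
        \<and> (\<forall>i\<in>{1..<n}. 0 < emeasure \<nu> {y i} \<and> emeasure \<nu> {y i} < \<infinity>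
              \<and> ((\<lambda>z. (complex_of_real (y i) - z) * stieltjes \<nu> z)
                   \<longlongrightarrow> complex_of_real (measure \<nu> {y i})) (at (complex_of_real (y i))))
        \<and> (\<forall>t>0. renewal_H (f_eta n a x) t
              = 1 / mean_eta (f_eta n a x) + (\<Sum>i\<in>{1..<n}. exp (- t * y i) * measure \<nu> {y i})))"
proof -
  interpret cfg2 n x a \<mu> \<nu>
    apply unfold_locales
    using n_pos x_pos x_incr a_pos \<mu>_sets \<mu>_def \<nu>_sets \<nu>_integrable \<nu>_stieltjes by auto
  have C1: "\<forall>z. Im z \<noteq> 0 \<longrightarrow> stieltjes \<nu> z = - 1 / (z * g z) - 1" using stieltjes_nu by blast
  have roots: "\<forall>i\<in>{1..<n}. x i < yy i \<and> yy i < x (Suc i)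
              \<and> (\<Sum>j\<in>{1..n}. a j / (x j - yy i)) = 0
              \<and> (\<forall>t. x i < t \<and> t < x (Suc i) \<and> (\<Sum>j\<in>{1..n}. a j / (x j - t)) = 0 \<longrightarrow> t = yy i)"
    using yy yy_unique unfolding g_real by blast
  have pts: "\<forall>i\<in>{1..<n}. 0 < emeasure \<nu> {yy i} \<and> emeasure \<nu> {yy i} < \<infinity>
              \<and> ((\<lambda>z. (complex_of_real (yy i) - z) * stieltjes \<nu> z)
                   \<longlongrightarrow> complex_of_real (measure \<nu> {yy i})) (at (complex_of_real (yy i)))"
  proof
    fix i assume i: "i \<in> {1..<n}"
    show "0 < emeasure \<nu> {yy i} \<and> emeasure \<nu> {yy i} < \<infinity>
              \<and> ((\<lambda>z. (complex_of_real (yy i) - z) * stieltjes \<nu> z)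
                   \<longlongrightarrow> complex_of_real (measure \<nu> {yy i})) (at (complex_of_real (yy i)))"
      using emeasure_pos[OF massy_pos[OF i]] lim_at[of "yy i"] i by auto
  qed
  have Hf: "\<forall>t>0. renewal_H (f_eta n a x) t
              = 1 / mean_eta (f_eta n a x) + (\<Sum>i\<in>{1..<n}. exp (- t * yy i) * measure \<nu> {yy i})"
    using H_formula[OF \<nu>_laplace] by blast
  show ?thesis
    using C1[unfolded gg_def] roots null_outside emeasure_pos[OF mass0_pos] pts Hf by blast
qed


end
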